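(* Let $\mathcal C$ be a concept hierarchy, $r_1,r_2,\epsilon\in[0,1]$ with $r_1\le r_2(1-\epsilon)$, $m$ a positive integer, and let $\mathcal H$ be the network defined below with a fixed failed set $F$ satisfying the stated constraint. Then for every $B\subseteq C_0$ presented at time 0 and every $c\in supp_{r_2}(B)$, at least $m(1-\epsilon)$ of the neurons $v\in reps(c)$ fire at time $level(c)$.
   Context: Concept hierarchies: fix positive integers $\ell_{max},n,k$. A universal set $D$ of concepts is partitioned into disjoint sets $D_0,\dots,D_{\ell_{max}}$ with $|D_0|=n$; $level(c)=\ell$ for $c\in D_\ell$. A concept hierarchy $\mathcal C$ consists of $C\subseteq D$, with $C_\ell=C\cap D_\ell$, and for each $c\in C_\ell$ with $1\le\ell\le\ell_{max}$ a set $children(c)\subseteq C_{\ell-1}$, such that $|C_{\ell_{max}}|=k$, $|children(c)|=k$ for all such $c$, and $children(c)\cap children(c')=\emptyset$ for distinct $c,c'\in C_\ell$. For $B\subseteq D_0$ and $r\in[0,1]$: $B(0)=B\cap C_0$; for $1\le\ell\le\ell_{max}$, $B(\ell)=\{c\in C_\ell:|children(c)\cap B(\ell-1)|\ge rk\}$; $supp_r(B)=\bigcup_{\ell}B(\ell)$. Network $\mathcal H$: neurons partitioned into layers $N_0,\dots,N_{\ell_{max}}$. Each $c\in D_0$ has a set $reps(c)$ of $m$ neurons in $N_0$, each $c\in C$ with $level(c)\ge1$ a set $reps(c)$ of $m$ neurons in $N_{level(c)}$, all pairwise disjoint. For $u\in N_{\ell-1}$, $v\in N_\ell$: $w(u,v)=1$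 iff $v\in reps(c)$ and $u\in reps(c')$ for a child $c'$ of $c$, else $0$. Threshold $\tau=r_2km(1-\epsilon)$. A fixed set $F$ of neurons is failed (failed neurons never fire), such that for every concept $c$ at least $m(1-\epsilon)$ neurons of $reps(c)$ are not in $F$. Input $B\subseteq C_0$ presented at time 0: a layer-0 neuron fires at time 0 iff it is in $\bigcup_{b\in B}reps(b)\setminus F$, and no layer-0 neuron fires at any other time. A non-failed $v\in N_\ell$, $\ell\ge1$, does not fire at time 0 and fires at time $t\ge1$ iff $\sum_{u\in N_{\ell-1}}w(u,v)x_u(t-1)\ge\tau$, where $x_u(s)\in\{0,1\}$ indicates whether $u$ fires at time $s$. *)

theory Defs
  imports Complex_Main
begin

text \<open>D is the universal set of concepts, level gives the layer
  (D_l = {c \<in> D. level c = l}), C is the set of concepts of the hierarchy,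
  children gives the children of concepts of level at least 1.\<close>

definition concept_hierarchy ::
  "nat \<Rightarrow> nat \<Rightarrow> nat \<Rightarrow> 'c set \<Rightarrow> ('c \<Rightarrow> nat) \<Rightarrow> 'c set \<Rightarrow> ('c \<Rightarrow> 'c set) \<Rightarrow> bool" where
  "concept_hierarchy lmax n k D level C children \<longleftrightarrow>
     (\<forall>c\<in>D. level c \<le> lmax) \<and>
     card {c\<in>D. level c = 0} = n \<and>
     C \<subseteq> D \<and>
     card {c\<in>C. level c = lmax} = k \<and>
     (\<forall>c\<in>C. 1 \<le> level c \<longrightarrow>
        children c \<subseteq> {c'\<in>C. level c' = level c - 1} \<and> card (children c) = k) \<and>
     (\<forall>c\<in>C. \<forall>c'\<in>C. 1 \<le> level c \<and> level c' = level c \<and> c \<noteq> c' \<longrightarrow>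
        children c \<inter> children c' = {})"

fun Blev :: "('c \<Rightarrow> nat) \<Rightarrow> 'c set \<Rightarrow> ('c \<Rightarrow> 'c set) \<Rightarrow> nat \<Rightarrow> real \<Rightarrow> 'c set \<Rightarrow> nat \<Rightarrow> 'c set" where
  "Blev level C children k r B 0 = B \<inter> {c\<in>C. level c = 0}"
| "Blev level C children k r B (Suc l) =
     {c\<in>C. level c = Suc l \<and>
        real (card (children c \<inter> Blev level C children k r B l)) \<ge> r * real k}"

definition supp :: "nat \<Rightarrow> ('c \<Rightarrow> nat) \<Rightarrow> 'c set \<Rightarrow> ('c \<Rightarrow> 'c set) \<Rightarrow> nat \<Rightarrow> real \<Rightarrow> 'c set \<Rightarrow> 'c set" where
  "supp lmax level C children k r B = (\<Union>l\<in>{0..lmax}. Blev level C children k r B l)"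

definition network ::
  "nat \<Rightarrow> 'c set \<Rightarrow> ('c \<Rightarrow> nat) \<Rightarrow> 'c set \<Rightarrow> 'n set \<Rightarrow> ('n \<Rightarrow> nat) \<Rightarrow> ('c \<Rightarrow> 'n set) \<Rightarrow> nat \<Rightarrow> bool" where
  "network lmax D level C N layer reps m \<longleftrightarrow>
     finite N \<and> (\<forall>u\<in>N. layer u \<le> lmax) \<and>
     (\<forall>c\<in>{c\<in>D. level c = 0} \<union> C.
        reps c \<subseteq> {u\<in>N. layer u = level c} \<and> card (reps c) = m) \<and>
     (\<forall>c\<in>{c\<in>D. level c = 0} \<union> C. \<forall>c'\<in>{c\<in>D. level c = 0} \<union> C.
        c \<noteq> c' \<longrightarrow> reps c \<inter> reps c' = {})"

text \<open>Weight w(u,v) (only used for u in layer l-1 and v in layer l).\<close>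
definition weight ::
  "('c \<Rightarrow> nat) \<Rightarrow> 'c set \<Rightarrow> ('c \<Rightarrow> 'c set) \<Rightarrow> ('c \<Rightarrow> 'n set) \<Rightarrow> 'n \<Rightarrow> 'n \<Rightarrow> real" where
  "weight level C children reps u v =
     (if \<exists>c\<in>C. 1 \<le> level c \<and> v \<in> reps c \<and> (\<exists>c'\<in>children c. u \<in> reps c') then 1 else 0)"

fun fires ::
  "'n set \<Rightarrow> ('n \<Rightarrow> nat) \<Rightarrow> ('c \<Rightarrow> nat) \<Rightarrow> 'c set \<Rightarrow> ('c \<Rightarrow> 'c set) \<Rightarrow> ('c \<Rightarrow> 'n set) \<Rightarrow>
   'n set \<Rightarrow> 'c set \<Rightarrow> real \<Rightarrow> nat \<Rightarrow> 'n \<Rightarrow> bool" where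
  "fires N layer level C children reps F B tau 0 u =
     (u \<in> N \<and> u \<notin> F \<and> layer u = 0 \<and> u \<in> (\<Union>b\<in>B. reps b))"
| "fires N layer level C children reps F B tau (Suc t) u =
     (u \<in> N \<and> u \<notin> F \<and> 1 \<le> layer u \<and>
      (\<Sum>u'\<in>{u'\<in>N. layer u' = layer u - 1}.
          weight level C children reps u' u *
          (if fires N layer level C children reps F B tau t u' then 1 else 0)) \<ge> tau)"

end

theory Submission
  imports Defs
begin

theorem theorem7p2:
  fixes lmax n k m :: nat
    and D C :: "'c set" and level :: "'c \<Rightarrow> nat" and children :: "'c \<Rightarrow> 'c set"
    and N F :: "'n set" and layer :: "'n \<Rightarrow> nat" and reps :: "'c \<Rightarrow> 'n set"
    and r1 r2 \<epsilon> :: real and B :: "'c set" and c :: 'c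
  assumes "0 < lmax" "0 < n" "0 < k" "0 < m"
    and "concept_hierarchy lmax n k D level C children"
    and "0 \<le> r1" "r1 \<le> 1" "0 \<le> r2" "r2 \<le> 1" "0 \<le> \<epsilon>" "\<epsilon> \<le> 1"
    and "r1 \<le> r2 * (1 - \<epsilon>)"
    and "network lmax D level C N layer reps m"
    and "\<forall>c'\<in>{c'\<in>D. level c' = 0} \<union> C. real (card (reps c' - F)) \<ge> real m * (1 - \<epsilon>)"
    and "B \<subseteq> {c'\<in>C. level c' = 0}"
    and "c \<in> supp lmax level C children k r2 B"
  shows "real (card {v\<in>reps c.
            fires N layer level C children reps F B (r2 * real k * real m * (1 - \<epsilon>)) (level c) v})
         \<ge> real m * (1 - \<epsilon>)"
proof -
  let ?tau = "r2 * real k * real m * (1 - \<epsilon>)"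
  let ?f = "fires N layer level C children reps F B ?tau"
  let ?B = "Blev level C children k r2 B"
  note CH = assms(5)[unfolded concept_hierarchy_def]
  note NW = assms(13)[unfolded network_def]
  have CD: "C \<subseteq> D" using CH by blast
  have repsC: "\<And>x. x \<in> C \<Longrightarrow> reps x \<subseteq> {u\<in>N. layer u = level x} \<and> card (reps x) = m"
    using NW CD by blast
  have disj: "\<And>x y. x \<in> C \<Longrightarrow> y \<in> C \<Longrightarrow> x \<noteq> y \<Longrightarrow> reps x \<inter> reps y = {}"
    using NW CD by blast
  have cardF: "\<And>x. x \<in> C \<Longrightarrow> real (card (reps x - F)) \<ge> real m * (1 - \<epsilon>)"
    using assms(14) by blast
  have finreps: "\<And>x. x \<in> C \<Longrightarrow> finite (reps x)"
    using repsC assms(4) by (metis card.infinite less_irrefl)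
  have Blev_sub: "\<And>l. ?B l \<subseteq> {x\<in>C. level x = l}"
  proof -
    fix l show "?B l \<subseteq> {x\<in>C. level x = l}" by (cases l) auto
  qed
  have main: "\<forall>x\<in>?B l. \<forall>v\<in>reps x - F. ?f l v" for l
  proof (induction l)
    case 0
    show ?case
    proof (intro ballI)
      fix x v assume x: "x \<in> ?B 0" and v: "v \<in> reps x - F"
      have "x \<in> B" "x \<in> C" "level x = 0" using x by auto
      then show "?f 0 v" using v repsC[of x] by auto
    qed
  next
    case (Suc l)
    show ?case
    proof (intro ballI)
      fix x v assume x: "x \<in> ?B (Suc l)" and v: "v \<in> reps x - F"
      have xC: "x \<in> C" and lx: "level x = Suc l"
        and cnt: "real (card (children x \<inter> ?B l)) \<ge> r2 * real k" using x by auto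
      have vN: "v \<in> N" "layer v = Suc l" using repsC[OF xC] v lx by auto
      have chx: "children x \<subseteq> {c'\<in>C. level c' = l}" and ck: "card (children x) = k"
      proof -
        have "\<forall>c\<in>C. 1 \<le> level c \<longrightarrow> children c \<subseteq> {c'\<in>C. level c' = level c - 1} \<and> card (children c) = k"
          using CH by blast
        then have "children x \<subseteq> {c'\<in>C. level c' = level x - 1} \<and> card (children x) = k"
        proof -
          have "1 \<le> level x" using lx by simp
          then show ?thesis using xC \<open>\<forall>c\<in>C. _\<close> by blast
        qed
        then show "children x \<subseteq> {c'\<in>C. level c' = l}" "card (children x) = k"
          using lx by simp_all
      qed
      have finch: "finite (children x)" using ck assms(3) by (metis card.infinite less_irrefl)
      let ?X = "children x \<inter> ?B l"
      let ?S = "\<Union>y\<in>?X. reps y - F"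
      let ?g = "\<lambda>u'. weight level C children reps u' v * (if ?f l u' then 1 else 0)"
      let ?L = "{u'\<in>N. layer u' = layer v - 1}"
      have finL: "finite ?L" using NW by auto
      have SL: "?S \<subseteq> ?L" using chx repsC vN by fastforce
      have g1: "\<And>u. u \<in> ?S \<Longrightarrow> ?g u = 1"
      proof -
        fix u assume "u \<in> ?S"
        then obtain y where y: "y \<in> ?X" "u \<in> reps y - F" by blast
        have "?f l u" using Suc y by blast
        moreover have "weight level C children reps u v = 1"
          unfolding weight_def using xC lx v y by auto
        ultimately show "?g u = 1" by simp
      qed
      have gnn: "\<And>u. 0 \<le> ?g u" by (simp add: weight_def)
      have finX: "finite ?X" using finch by simp
      have "real (card ?S) = (\<Sum>y\<in>?X. real (card (reps y - F)))"
      proof -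
        have "card ?S = (\<Sum>y\<in>?X. card (reps y - F))"
        proof (rule card_UN_disjoint[OF finX])
          show "\<forall>i\<in>?X. finite (reps i - F)" using chx finreps by blast
          show "\<forall>i\<in>?X. \<forall>j\<in>?X. i \<noteq> j \<longrightarrow> (reps i - F) \<inter> (reps j - F) = {}"
            using chx disj by blast
        qed
        then show ?thesis by simp
      qed
      also have "\<dots> \<ge> (\<Sum>y\<in>?X. real m * (1 - \<epsilon>))"
        by (rule sum_mono) (use chx cardF in blast)
      finally have "real (card ?S) \<ge> real (card ?X) * (real m * (1 - \<epsilon>))" by simp
      moreover have "real (card ?X) * (real m * (1 - \<epsilon>)) \<ge> r2 * real k * (real m * (1 - \<epsilon>))"
        by (rule mult_right_mono[OF cnt]) (use assms(11) in simp)
      ultimately have S_ge: "real (card ?S) \<ge> ?tau" by (simp add: mult.assoc)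
      have "real (card ?S) = sum ?g ?S" using g1 by simp
      also have "\<dots> \<le> sum ?g ?L"
        by (rule sum_mono2[OF finL SL]) (use gnn in blast)
      finally have "sum ?g ?L \<ge> ?tau" using S_ge by linarith
      then show "?f (Suc l) v" using vN v by simp
    qed
  qed
  obtain l where cl: "c \<in> ?B l" using assms(16) unfolding supp_def by blast
  have cC: "c \<in> C" and lc: "level c = l" using cl Blev_sub by auto
  have "reps c - F \<subseteq> {v\<in>reps c. ?f (level c) v}" using main cl lc by auto
  then have "card (reps c - F) \<le> card {v\<in>reps c. ?f (level c) v}"
    by (rule card_mono[rotated]) (use finreps cC in simp)
  then show ?thesis using cardF[OF cC] by linarith
qed

end
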